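(* Let $m\ge2$, $k\ge1$ be integers, $\tau>0$, and $\Theta\sim U[0,1]$. Then: (1) $\mathbb{E}_\Theta[\mathcal{R}_{m,k,\Theta}(t)]=\frac{k(m^{1/k}-1)}{\ln m}\cdot t$ for every $t>0$; (2) $\mathbb{E}_\Theta\!\left[\frac{1}{\mathcal{R}_{m,k,\Theta}(t)}\right]=\frac{k(m^{1/k}-1)}{m^{1/k}\ln m}\cdot\frac1t$ for every $t>0$; (3) $\mathbb{E}_\Theta[\mathcal{D}_{m,k,\Theta}]=\frac{k(m^{1/k}-1)}{m^{1/k}\ln m}\cdot\Big(\sum_{\emptyset\ne\mathcal{N}\subseteq\mathcal{S}_{m,k}}\frac{(-1)^{|\mathcal{N}|+1}}{\mathrm{LCM}(\mathcal{N})}\Big)\cdot\frac1\tau$, where $\mathcal{S}_{m,k}=\{m^{(\kappa-1)/k}\}_{\kappa\in[k]}$.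
   Context: For $\theta\in[0,1]$, the shifted grid is $\mathcal{G}_{m,k,\theta}=\{m^{(p+\theta)/k}\tau:p\in\mathbb{Z}\}$ and $\mathcal{R}_{m,k,\theta}(t)=\min\{g\in\mathcal{G}_{m,k,\theta}:g>t\}$ for $t>0$. For $g>0$, $\Delta\ge0$, $\mathcal{M}_{g,\Delta}=\{0,g,2g,\dots,\lfloor\Delta/g\rfloor g\}$. The density coefficient is $\mathcal{D}_{m,k,\theta}=\lim_{\Delta\to\infty}\frac1\Delta\big|\bigcup_{g\in\mathcal{G}_{m,k,\theta}\cap[\mathcal{R}_{m,k,\theta}(\tau),\infty)}\mathcal{M}_{g,\Delta}\big|$. For a finite set $\mathcal{N}\subseteq\mathbb{R}_{>0}$, $\mathrm{LCM}(\mathcal{N})$ is the smallest positive real that is an integer multiple of every element of $\mathcal{N}$, or $\infty$ if none exists; $1/\infty=0$. *)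

theory Defs
  imports "HOL-Analysis.Analysis"
begin

definition grid :: "nat \<Rightarrow> nat \<Rightarrow> real \<Rightarrow> real \<Rightarrow> real set" where
  "grid m k \<theta> \<tau> = {real m powr ((real_of_int p + \<theta>) / real k) * \<tau> | p :: int. True}"

definition rnd :: "nat \<Rightarrow> nat \<Rightarrow> real \<Rightarrow> real \<Rightarrow> real \<Rightarrow> real" where
  "rnd m k \<theta> \<tau> t = (LEAST g. g \<in> grid m k \<theta> \<tau> \<and> t < g)"

definition mults :: "real \<Rightarrow> real \<Rightarrow> real set" where
  "mults g \<Delta> = (\<lambda>j. real j * g) ` {0..nat \<lfloor>\<Delta> / g\<rfloor>}"

definition density :: "nat \<Rightarrow> nat \<Rightarrow> real \<Rightarrow> real \<Rightarrow> real" where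
  "density m k \<theta> \<tau> =
     Lim at_top (\<lambda>\<Delta>. real (card (\<Union>g\<in>{g \<in> grid m k \<theta> \<tau>. rnd m k \<theta> \<tau> \<tau> \<le> g}. mults g \<Delta>)) / \<Delta>)"

definition common_pos_mult :: "real set \<Rightarrow> real \<Rightarrow> bool" where
  "common_pos_mult N x \<longleftrightarrow> 0 < x \<and> (\<forall>n\<in>N. \<exists>j::int. x = real_of_int j * n)"

text \<open>1 / LCM(N), where LCM(N) is the least common positive multiple, and 1/infinity = 0
  if no common positive multiple exists.\<close>
definition inv_LCM :: "real set \<Rightarrow> real" where
  "inv_LCM N = (if \<exists>x. common_pos_mult N x
                then 1 / (LEAST x. common_pos_mult N x) else 0)"

definition Sset :: "nat \<Rightarrow> nat \<Rightarrow> real set" where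
  "Sset m k = (\<lambda>\<kappa>. real m powr ((real \<kappa> - 1) / real k)) ` {1..k}"

end

theory Submission
  imports Defs
begin

lemma exp_piece:
  fixes c a lo hi :: real
  assumes "c \<noteq> 0" "lo \<le> hi"
  shows "((\<lambda>\<theta>. exp (c * (a + \<theta>))) has_integral (exp (c * (a + hi)) - exp (c * (a + lo))) / c) {lo..hi}"
proof -
  have "((\<lambda>\<theta>. exp (c * (a + \<theta>))) has_integral (\<lambda>\<theta>. exp (c * (a + \<theta>)) / c) hi - (\<lambda>\<theta>. exp (c * (a + \<theta>)) / c) lo) {lo..hi}"
  proof (rule fundamental_theorem_of_calculus[OF assms(2)])
    fix x assume "x \<in> {lo..hi}"
    have "((\<lambda>\<theta>. exp (c * (a + \<theta>)) / c) has_real_derivative exp (c * (a + x))) (at x within {lo..hi})"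
      using assms(1) by (auto intro!: derivative_eq_intros)
    then show "((\<lambda>\<theta>. exp (c * (a + \<theta>)) / c) has_vector_derivative exp (c * (a + x))) (at x within {lo..hi})"
      by (simp add: has_real_derivative_iff_has_vector_derivative)
  qed
  then show ?thesis by (simp add: diff_divide_distrib)
qed

lemma exp_floor_integral:
  fixes c s :: real
  assumes "c \<noteq> 0"
  shows "((\<lambda>\<theta>. exp (c * (of_int \<lfloor>s - \<theta>\<rfloor> + 1 + \<theta>))) has_integral (exp (c * (s + 1)) - exp (c * s)) / c) {0..1}"
proof -
  define n where "n = \<lfloor>s\<rfloor>"
  define r where "r = s - of_int n"
  have r0: "0 \<le> r" and r1: "r < 1" unfolding r_def n_def by linarith+
  have I1: "((\<lambda>\<theta>. exp (c * (of_int n + 1 + \<theta>))) has_integral (exp (c * (of_int n + 1 + r)) - exp (c * (of_int n + 1 + 0))) / c) {0..r}"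
    using exp_piece[OF assms r0] by simp
  have I1': "((\<lambda>\<theta>. exp (c * (of_int \<lfloor>s - \<theta>\<rfloor> + 1 + \<theta>))) has_integral (exp (c * (of_int n + 1 + r)) - exp (c * (of_int n + 1 + 0))) / c) {0..r}"
  proof (rule has_integral_spike_finite[OF finite.emptyI _ I1])
    fix x assume "x \<in> {0..r} - {}"
    then have "\<lfloor>s - x\<rfloor> = n" using r1 r_def by (intro floor_unique) auto
    then show "exp (c * (of_int \<lfloor>s - x\<rfloor> + 1 + x)) = exp (c * (of_int n + 1 + x))" by simp
  qed
  have I2: "((\<lambda>\<theta>. exp (c * (of_int n + \<theta>))) has_integral (exp (c * (of_int n + 1)) - exp (c * (of_int n + r))) / c) {r..1}"
    using exp_piece[OF assms] r1 by simp
  have I2': "((\<lambda>\<theta>. exp (c * (of_int \<lfloor>s - \<theta>\<rfloor> + 1 + \<theta>))) has_integral (exp (c * (of_int n + 1)) - exp (c * (of_int n + r))) / c) {r..1}"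
  proof (rule has_integral_spike_finite[of "{r}", OF _ _ I2])
    fix x assume "x \<in> {r..1} - {r}"
    then have "\<lfloor>s - x\<rfloor> = n - 1" using r0 r_def by (intro floor_unique) auto
    then show "exp (c * (of_int \<lfloor>s - x\<rfloor> + 1 + x)) = exp (c * (of_int n + x))" by simp
  qed simp
  have "((\<lambda>\<theta>. exp (c * (of_int \<lfloor>s - \<theta>\<rfloor> + 1 + \<theta>))) has_integral
     (exp (c * (of_int n + 1 + r)) - exp (c * (of_int n + 1 + 0))) / c + (exp (c * (of_int n + 1)) - exp (c * (of_int n + r))) / c) {0..1}"
    by (rule has_integral_combine[OF r0 _ I1' I2']) (use r1 in simp)
  moreover have "(exp (c * (of_int n + 1 + r)) - exp (c * (of_int n + 1 + 0))) / c + (exp (c * (of_int n + 1)) - exp (c * (of_int n + r))) / c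
     = (exp (c * (s + 1)) - exp (c * s)) / c"
    unfolding r_def by (simp add: algebra_simps flip: add_divide_distrib)
  ultimately show ?thesis by simp
qed

definition LL :: "nat \<Rightarrow> nat \<Rightarrow> real" where "LL m k = ln (real m) / real k"

context
  fixes m k :: nat and \<tau> :: real
  assumes m2: "m \<ge> 2" and k1: "k \<ge> 1" and tau: "\<tau> > 0"
begin

lemma LL_pos: "LL m k > 0"
  using m2 k1 unfolding LL_def by (auto intro!: divide_pos_pos)

lemma mpowr: "real m powr x = exp (LL m k * (real k * x))"
  using m2 k1 unfolding LL_def powr_def by (auto simp: field_simps)

lemma grid_eq: "grid m k \<theta> \<tau> = {\<tau> * exp (LL m k * (of_int p + \<theta>)) | p. True}"
  unfolding grid_def mpowr using k1 by (auto simp: field_simps)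

lemma rnd_eq:
  assumes t: "t > 0"
  shows "rnd m k \<theta> \<tau> t = \<tau> * exp (LL m k * (of_int \<lfloor>ln (t / \<tau>) / LL m k - \<theta>\<rfloor> + 1 + \<theta>))"
proof -
  define L where "L = LL m k"
  define s where "s = ln (t / \<tau>) / L"
  have L: "L > 0" using LL_pos L_def by simp
  have es: "exp (L * s) = t / \<tau>" using L t tau unfolding s_def by simp
  have key: "\<tau> * exp (L * x) > t \<longleftrightarrow> x > s" for x
  proof -
    have "\<tau> * exp (L * x) > t \<longleftrightarrow> exp (L * x) > t / \<tau>"
      using tau by (simp add: field_simps)
    also have "\<dots> \<longleftrightarrow> exp (L * x) > exp (L * s)" using es by simp
    also have "\<dots> \<longleftrightarrow> x > s" using L by simp
    finally show ?thesis .
  qed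
  have "(LEAST g. g \<in> grid m k \<theta> \<tau> \<and> t < g) = \<tau> * exp (L * (of_int \<lfloor>s - \<theta>\<rfloor> + 1 + \<theta>))"
  proof (rule Least_equality)
    show "\<tau> * exp (L * (of_int \<lfloor>s - \<theta>\<rfloor> + 1 + \<theta>)) \<in> grid m k \<theta> \<tau> \<and> t < \<tau> * exp (L * (of_int \<lfloor>s - \<theta>\<rfloor> + 1 + \<theta>))"
      unfolding grid_eq L_def[symmetric] key
      by (auto intro!: exI[of _ "\<lfloor>s - \<theta>\<rfloor> + 1"]) linarith
  next
    fix y assume "y \<in> grid m k \<theta> \<tau> \<and> t < y"
    then obtain p where y: "y = \<tau> * exp (L * (of_int p + \<theta>))" and "t < y"
      unfolding grid_eq L_def[symmetric] by auto
    then have "of_int p + \<theta> > s" using key by simp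
    then have "\<lfloor>s - \<theta>\<rfloor> < p" by linarith
    then have "of_int \<lfloor>s - \<theta>\<rfloor> + 1 + \<theta> \<le> of_int p + \<theta>" by linarith
    then show "\<tau> * exp (L * (of_int \<lfloor>s - \<theta>\<rfloor> + 1 + \<theta>)) \<le> y"
      unfolding y using L tau by simp
  qed
  then show ?thesis unfolding rnd_def L_def s_def .
qed

lemma exp_LL: "exp (LL m k) = real m powr (1 / real k)"
  unfolding mpowr using k1 by simp

lemma part1:
  assumes t: "t > 0"
  shows "((\<lambda>\<theta>. rnd m k \<theta> \<tau> t) has_integral
               (real k * (real m powr (1 / real k) - 1) / ln (real m) * t)) {0..1}"
proof -
  define L where "L = LL m k"
  define s where "s = ln (t / \<tau>) / L"
  define q where "q = real m powr (1 / real k)"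
  have L: "L > 0" using LL_pos L_def by simp
  have es: "exp (L * s) = t / \<tau>" using L t tau unfolding s_def by simp
  have lnm: "ln (real m) = L * real k" unfolding L_def LL_def using k1 by simp
  have eL: "exp L = q" unfolding q_def L_def by (rule exp_LL)
  have eqf: "(\<lambda>\<theta>. rnd m k \<theta> \<tau> t) = (\<lambda>\<theta>. \<tau> * exp (L * (of_int \<lfloor>s - \<theta>\<rfloor> + 1 + \<theta>)))"
    using rnd_eq[OF t] unfolding L_def s_def by simp
  have "exp (L * (s + 1)) = exp (L * s) * exp L" by (simp add: algebra_simps exp_add)
  then have e2: "exp (L * (s + 1)) = t / \<tau> * q" using es eL by simp
  have eqv: "\<tau> * ((exp (L * (s + 1)) - exp (L * s)) / L) = real k * (q - 1) / ln (real m) * t"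
    unfolding e2 es lnm using tau L k1 by (simp add: field_simps)
  show ?thesis unfolding eqf q_def[symmetric] eqv[symmetric]
    by (rule has_integral_mult_right[OF exp_floor_integral]) (use L in simp)
qed

lemma part2:
  assumes t: "t > 0"
  shows "((\<lambda>\<theta>. 1 / rnd m k \<theta> \<tau> t) has_integral
               (real k * (real m powr (1 / real k) - 1) / (real m powr (1 / real k) * ln (real m)) * (1 / t))) {0..1}"
proof -
  define L where "L = LL m k"
  define s where "s = ln (t / \<tau>) / L"
  define q where "q = real m powr (1 / real k)"
  have L: "L > 0" using LL_pos L_def by simp
  have es: "exp (L * s) = t / \<tau>" using L t tau unfolding s_def by simp
  have lnm: "ln (real m) = L * real k" unfolding L_def LL_def using k1 by simp
  have eL: "exp L = q" unfolding q_def L_def by (rule exp_LL)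
  have q0: "q > 0" using eL by auto
  have eqf: "(\<lambda>\<theta>. 1 / rnd m k \<theta> \<tau> t) = (\<lambda>\<theta>. (1 / \<tau>) * exp ((- L) * (of_int \<lfloor>s - \<theta>\<rfloor> + 1 + \<theta>)))"
    by (rule ext) (simp only: rnd_eq[OF t] L_def s_def mult_minus_left exp_minus, simp add: field_simps)
  have "exp ((- L) * (s + 1)) = 1 / (exp (L * s) * exp L)" 
    by (simp only: mult_minus_left exp_minus distrib_left mult_1_right exp_add) (simp add: field_simps)
  then have e2: "exp ((- L) * (s + 1)) = 1 / (t / \<tau> * q)" using es eL by simp
  have e3: "exp ((- L) * s) = 1 / (t / \<tau>)" using es by (simp add: exp_minus field_simps)
  have eqv: "(1 / \<tau>) * ((exp ((- L) * (s + 1)) - exp ((- L) * s)) / (- L)) = real k * (q - 1) / (q * ln (real m)) * (1 / t)"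
    unfolding e2 e3 lnm using tau L k1 t q0 by (simp add: field_simps)
  show ?thesis unfolding eqf q_def[symmetric] eqv[symmetric]
    by (rule has_integral_mult_right[OF exp_floor_integral]) (use L in simp)
qed

end

lemma mults_iff:
  assumes g: "g > 0" and D: "\<Delta> \<ge> 0"
  shows "x \<in> mults g \<Delta> \<longleftrightarrow> 0 \<le> x \<and> x \<le> \<Delta> \<and> (\<exists>j::int. x = of_int j * g)"
proof
  assume "x \<in> mults g \<Delta>"
  then obtain i where i: "i \<le> nat \<lfloor>\<Delta> / g\<rfloor>" and x: "x = real i * g" unfolding mults_def by auto
  have f0: "\<lfloor>\<Delta> / g\<rfloor> \<ge> 0" using D g by simp
  have "real i \<le> real (nat \<lfloor>\<Delta> / g\<rfloor>)" using i by simp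
  also have "\<dots> = of_int \<lfloor>\<Delta> / g\<rfloor>" using f0 by simp
  also have "\<dots> \<le> \<Delta> / g" by simp
  finally have "real i \<le> \<Delta> / g" .
  then have "x \<le> \<Delta>" using g x by (simp add: field_simps)
  then show "0 \<le> x \<and> x \<le> \<Delta> \<and> (\<exists>j::int. x = of_int j * g)" using x g by (auto intro!: exI[of _ "int i"])
next
  assume "0 \<le> x \<and> x \<le> \<Delta> \<and> (\<exists>j::int. x = of_int j * g)"
  then obtain j where x: "x = of_int j * g" and x0: "0 \<le> x" and xD: "x \<le> \<Delta>" by auto
  have j0: "j \<ge> 0" using x x0 g by (simp add: zero_le_mult_iff)
  have "of_int j \<le> \<Delta> / g" using xD x g by (simp add: field_simps)
  then have "j \<le> \<lfloor>\<Delta> / g\<rfloor>" by (simp add: le_floor_iff)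
  then have "nat j \<in> {0..nat \<lfloor>\<Delta> / g\<rfloor>}" by auto
  moreover have "x = real (nat j) * g" using x j0 by simp
  ultimately show "x \<in> mults g \<Delta>" unfolding mults_def by blast
qed

lemma finite_mults: "finite (mults g \<Delta>)"
  unfolding mults_def by simp

lemma card_mults:
  assumes g: "g > 0"
  shows "card (mults g \<Delta>) = nat \<lfloor>\<Delta> / g\<rfloor> + 1"
proof -
  have "inj_on (\<lambda>j. real j * g) {0..nat \<lfloor>\<Delta> / g\<rfloor>}" using g by (auto simp: inj_on_def)
  then show ?thesis unfolding mults_def by (simp add: card_image)
qed

lemma lim_floor:
  assumes c: "c > 0"
  shows "((\<lambda>\<Delta>. real (nat \<lfloor>\<Delta> / c\<rfloor> + 1) / \<Delta>) \<longlongrightarrow> 1 / c) at_top"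
proof (rule tendsto_sandwich[of "\<lambda>_. 1 / c" _ _ "\<lambda>\<Delta>. 1 / c + 1 / \<Delta>"])
  show "\<forall>\<^sub>F \<Delta> in at_top. 1 / c \<le> real (nat \<lfloor>\<Delta> / c\<rfloor> + 1) / \<Delta>"
    using eventually_gt_at_top[of 0]
  proof eventually_elim
    case (elim \<Delta>)
    have "\<Delta> / c \<le> real (nat \<lfloor>\<Delta> / c\<rfloor> + 1)" using elim c by linarith
    then show ?case using elim c by (simp add: field_simps)
  qed
  show "\<forall>\<^sub>F \<Delta> in at_top. real (nat \<lfloor>\<Delta> / c\<rfloor> + 1) / \<Delta> \<le> 1 / c + 1 / \<Delta>"
    using eventually_gt_at_top[of 0]
  proof eventually_elim
    case (elim \<Delta>)
    have "real (nat \<lfloor>\<Delta> / c\<rfloor> + 1) \<le> \<Delta> / c + 1" using elim c by (simp add: divide_nonneg_pos) 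
    then show ?case using elim c by (simp add: field_simps)
  qed
  show "((\<lambda>_. 1 / c) \<longlongrightarrow> 1 / c) at_top" by simp
  have "((\<lambda>\<Delta>. 1 / c + 1 / \<Delta>) \<longlongrightarrow> 1 / c + 0) at_top"
    by (intro tendsto_add tendsto_const tendsto_divide_0[OF tendsto_const] filterlim_at_top_imp_at_infinity filterlim_ident)
  then show "((\<lambda>\<Delta>. 1 / c + 1 / \<Delta>) \<longlongrightarrow> 1 / c) at_top" by simp
qed

definition cm :: "real set \<Rightarrow> real \<Rightarrow> bool" where
  "cm B y \<longleftrightarrow> (\<forall>n\<in>B. \<exists>j::int. y = of_int j * n)"

lemma cm_diff: "cm B a \<Longrightarrow> cm B b \<Longrightarrow> cm B (a - of_int i * b)"
  unfolding cm_def
proof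
  fix n assume "\<forall>n\<in>B. \<exists>j::int. a = of_int j * n" "\<forall>n\<in>B. \<exists>j::int. b = of_int j * n" "n \<in> B"
  then obtain ja jb where "a = of_int ja * n" "b = of_int jb * n" by blast
  then have "a - of_int i * b = of_int (ja - i * jb) * n" by (simp add: algebra_simps)
  then show "\<exists>j::int. a - of_int i * b = of_int j * n" by blast
qed

lemma cpm_cm: "common_pos_mult B x \<longleftrightarrow> x > 0 \<and> cm B x"
  unfolding common_pos_mult_def cm_def by auto

lemma lcm_none:
  assumes "\<not> (\<exists>x. common_pos_mult B x)" "cm B x" "x \<ge> 0"
  shows "x = 0"
  using assms cpm_cm by force

lemma lcm_some:
  assumes ex: "\<exists>x. common_pos_mult B x" and n0: "n0 \<in> B" and pos: "\<And>n. n \<in> B \<Longrightarrow> n > 0"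
  shows "\<exists>l>0. inv_LCM B = 1 / l \<and> (\<forall>x. cm B x \<longleftrightarrow> (\<exists>i::int. x = of_int i * l))"
proof -
  have n0p: "n0 > 0" using pos n0 by simp
  obtain x0 where x0: "common_pos_mult B x0" using ex by blast
  then obtain j0 :: int where "x0 = of_int j0 * n0" using n0 unfolding common_pos_mult_def by blast
  with x0 n0p have j0: "j0 > 0" "common_pos_mult B (real (nat j0) * n0)"
    unfolding common_pos_mult_def by (auto simp: zero_less_mult_iff)
  define J where "J = (LEAST j::nat. common_pos_mult B (real j * n0))"
  have J: "common_pos_mult B (real J * n0)" unfolding J_def by (rule LeastI[of "\<lambda>j. common_pos_mult B (real j * n0)", OF j0(2)])
  define l where "l = real J * n0"
  have l: "common_pos_mult B l" using J l_def by simp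
  have lpos: "l > 0" using l unfolding common_pos_mult_def by simp
  have lmin: "l \<le> x" if cx: "common_pos_mult B x" for x
  proof -
    obtain j :: int where jx: "x = of_int j * n0" using cx n0 unfolding common_pos_mult_def by blast
    with that n0p have "j > 0" unfolding common_pos_mult_def by (auto simp: zero_less_mult_iff)
    then have "x = real (nat j) * n0" using jx by simp
    then have "common_pos_mult B (real (nat j) * n0)" using that by simp
    then have "J \<le> nat j" unfolding J_def by (rule Least_le)
    then show "l \<le> x" using \<open>x = real (nat j) * n0\<close> l_def n0p by (simp add: mult_right_mono)
  qed
  have least: "(LEAST x. common_pos_mult B x) = l" by (rule Least_equality[of "common_pos_mult B", OF l lmin])
  have inv: "inv_LCM B = 1 / l" unfolding inv_LCM_def using ex least by simp
  have "cm B x \<longleftrightarrow> (\<exists>i::int. x = of_int i * l)" for x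
  proof
    assume cx: "cm B x"
    define i where "i = \<lfloor>x / l\<rfloor>"
    define r where "r = x - of_int i * l"
    have cr: "cm B r" unfolding r_def by (rule cm_diff[OF cx]) (use l cpm_cm in auto)
    have r0: "r \<ge> 0" using floor_divide_lower[OF lpos, of x] unfolding r_def i_def by simp
    have r1: "r < l" using floor_divide_upper[OF lpos, of x] unfolding r_def i_def by (simp add: algebra_simps)
    have "r = 0"
    proof (rule ccontr)
      assume "r \<noteq> 0"
      then have "common_pos_mult B r" using r0 cr cpm_cm by auto
      then show False using lmin r1 by fastforce
    qed
    then show "\<exists>i::int. x = of_int i * l" unfolding r_def by auto
  next
    assume "\<exists>i::int. x = of_int i * l"
    then obtain i :: int where "x = of_int i * l" by blast
    moreover have "cm B l" using l cpm_cm by auto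
    ultimately show "cm B x" using cm_diff[of B 0 l "- i"] by (simp add: cm_def)
  qed
  then show ?thesis using lpos inv by blast
qed

lemma IE:
  assumes "finite S" "\<And>a. a \<in> S \<Longrightarrow> finite (A a)"
  shows "real (card (\<Union>(A ` S))) = (\<Sum>B\<in>Pow S - {{}}. (-1) ^ (card B + 1) * real (card (\<Inter>(A ` B))))"
proof -
  interpret Incl_Excl finite "real o card"
    by unfold_locales (auto simp: card_Un_disjnt)
  have "{B. B \<subseteq> S \<and> B \<noteq> {}} = Pow S - {{}}" by auto
  then show ?thesis using restricted_indexed[of S A] assms by simp
qed

lemma lim_inter:
  assumes B: "B \<noteq> {}" and pos: "\<And>n. n \<in> B \<Longrightarrow> n > 0" and g0: "g0 > 0"
  shows "((\<lambda>\<Delta>. real (card (\<Inter>n\<in>B. mults (g0 * n) \<Delta>)) / \<Delta>) \<longlongrightarrow> inv_LCM B / g0) at_top"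
proof -
  obtain n0 where n0: "n0 \<in> B" using B by blast
  have inter: "(\<Inter>n\<in>B. mults (g0 * n) \<Delta>) = {x. 0 \<le> x \<and> x \<le> \<Delta> \<and> cm B (x / g0)}" if D: "\<Delta> \<ge> 0" for \<Delta>
  proof -
    have "x = of_int j * (g0 * n) \<longleftrightarrow> x / g0 = of_int j * n" for x j n
      using g0 by (auto simp: field_simps)
    then show ?thesis using B D g0 pos unfolding cm_def
      by (auto simp: mults_iff)
  qed
  show ?thesis
  proof (cases "\<exists>x. common_pos_mult B x")
    case False
    have seteq: "(\<Inter>n\<in>B. mults (g0 * n) \<Delta>) = {0}" if D: "\<Delta> \<ge> 0" for \<Delta>
    proof -
      have "cm B 0" unfolding cm_def by (auto intro!: exI[of _ 0])
      moreover have "x = 0" if "cm B (x / g0)" "x \<ge> 0" for x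
        using lcm_none[OF False that(1)] that(2) g0 by simp
      ultimately show ?thesis unfolding inter[OF D] using D by auto
    qed
    have ev: "\<forall>\<^sub>F \<Delta> in at_top. 1 / \<Delta> = real (card (\<Inter>n\<in>B. mults (g0 * n) \<Delta>)) / \<Delta>"
      using eventually_ge_at_top[of 0] by eventually_elim (simp add: seteq)
    have "((\<lambda>\<Delta>. 1 / \<Delta>) \<longlongrightarrow> (0::real)) at_top"
      by (rule tendsto_divide_0[OF tendsto_const filterlim_at_top_imp_at_infinity[OF filterlim_ident]])
    then have "((\<lambda>\<Delta>. real (card (\<Inter>n\<in>B. mults (g0 * n) \<Delta>)) / \<Delta>) \<longlongrightarrow> 0) at_top"
      using tendsto_cong[OF ev] by simp
    moreover have "inv_LCM B = 0" unfolding inv_LCM_def using False by auto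
    ultimately show ?thesis by simp
  next
    case True
    then obtain l where l: "l > 0" "inv_LCM B = 1 / l" and cml: "\<And>x. cm B x \<longleftrightarrow> (\<exists>i::int. x = of_int i * l)"
      using lcm_some[OF True n0 pos] by blast
    have seteq: "(\<Inter>n\<in>B. mults (g0 * n) \<Delta>) = mults (g0 * l) \<Delta>" if D: "\<Delta> \<ge> 0" for \<Delta>
    proof -
      have "x / g0 = of_int i * l \<longleftrightarrow> x = of_int i * (g0 * l)" for x i
        using g0 by (auto simp: field_simps)
      then show ?thesis unfolding inter[OF D] using mults_iff[of "g0 * l" \<Delta>] g0 l D cml by auto
    qed
    have ev: "\<forall>\<^sub>F \<Delta> in at_top. real (nat \<lfloor>\<Delta> / (g0 * l)\<rfloor> + 1) / \<Delta> = real (card (\<Inter>n\<in>B. mults (g0 * n) \<Delta>)) / \<Delta>"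
      using eventually_ge_at_top[of 0] by eventually_elim (simp add: seteq card_mults g0 l)
    have "((\<lambda>\<Delta>. real (card (\<Inter>n\<in>B. mults (g0 * n) \<Delta>)) / \<Delta>) \<longlongrightarrow> 1 / (g0 * l)) at_top"
      using tendsto_cong[OF ev] lim_floor[of "g0 * l"] g0 l by simp
    then show ?thesis using l by (simp add: mult.commute)
  qed
qed

context
  fixes m k :: nat and \<tau> :: real
  assumes m2: "m \<ge> 2" and k1: "k \<ge> 1" and tau: "\<tau> > 0"
begin

lemma density_eq:
  "density m k \<theta> \<tau> = (\<Sum>N\<in>Pow (Sset m k) - {{}}. (-1) ^ (card N + 1) * inv_LCM N) / rnd m k \<theta> \<tau> \<tau>"
proof -
  define L where "L = LL m k"
  have L: "L > 0" using LL_pos[OF m2 k1 tau] L_def by simp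
  define g0 where "g0 = rnd m k \<theta> \<tau> \<tau>"
  define p0 where "p0 = \<lfloor>ln (\<tau> / \<tau>) / L - \<theta>\<rfloor> + 1"
  have g0eq: "g0 = \<tau> * exp (L * (of_int p0 + \<theta>))"
    unfolding g0_def p0_def L_def using rnd_eq[OF m2 k1 tau tau] by simp
  have g0pos: "g0 > 0" using g0eq tau by simp
  have lnm: "L * real k = ln (real m)" unfolding L_def LL_def using k1 by simp
  have eLk: "exp (L * real k) = real m" using lnm m2 by simp
  have G0: "{g \<in> grid m k \<theta> \<tau>. g0 \<le> g} = range (\<lambda>j::nat. g0 * exp (L * real j))"
  proof (intro equalityI subsetI)
    fix g assume "g \<in> {g \<in> grid m k \<theta> \<tau>. g0 \<le> g}"
    then obtain p where g: "g = \<tau> * exp (L * (of_int p + \<theta>))" and le: "g0 \<le> g"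
      unfolding grid_eq[OF m2 k1 tau] L_def by auto
    have "exp (L * (of_int p0 + \<theta>)) \<le> exp (L * (of_int p + \<theta>))" using le g g0eq tau by simp
    then have "L * (of_int p0 + \<theta>) \<le> L * (of_int p + \<theta>)" by simp
    then have "p0 \<le> p" using L by (simp add: mult_le_cancel_left)
    then have "real (nat (p - p0)) = of_int p - of_int p0" by simp
    then have "g = g0 * exp (L * real (nat (p - p0)))"
      unfolding g g0eq by (simp add: mult.assoc flip: exp_add) (simp add: algebra_simps)
    then show "g \<in> range (\<lambda>j::nat. g0 * exp (L * real j))" by blast
  next
    fix g assume "g \<in> range (\<lambda>j::nat. g0 * exp (L * real j))"
    then obtain j :: nat where g: "g = g0 * exp (L * real j)" by blast
    have "g = \<tau> * exp (L * (of_int (p0 + int j) + \<theta>))"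
      unfolding g g0eq by (simp add: mult.assoc flip: exp_add) (simp add: algebra_simps)
    then have "g \<in> grid m k \<theta> \<tau>" unfolding grid_eq[OF m2 k1 tau] L_def by blast
    moreover have "g0 \<le> g" unfolding g using g0pos L by simp
    ultimately show "g \<in> {g \<in> grid m k \<theta> \<tau>. g0 \<le> g}" by blast
  qed
  have Ss: "Sset m k = (\<lambda>b::nat. exp (L * real b)) ` {0..<k}"
  proof -
    have "real m powr ((real \<kappa> - 1) / real k) = exp (L * real (\<kappa> - 1))" if "\<kappa> \<in> {1..k}" for \<kappa>
      unfolding mpowr[OF m2 k1 tau] L_def using that k1 by (simp add: of_nat_diff)
    then have "Sset m k = (\<lambda>\<kappa>. exp (L * real (\<kappa> - 1))) ` {1..k}"
      unfolding Sset_def by (intro image_cong) auto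
    also have "\<dots> = (\<lambda>b::nat. exp (L * real b)) ` {0..<k}"
    proof (intro equalityI subsetI)
      fix x assume "x \<in> (\<lambda>\<kappa>. exp (L * real (\<kappa> - 1))) ` {1..k}"
      then obtain \<kappa> where "\<kappa> \<in> {1..k}" "x = exp (L * real (\<kappa> - 1))" by blast
      then show "x \<in> (\<lambda>b::nat. exp (L * real b)) ` {0..<k}" by (intro image_eqI[of _ _ "\<kappa> - 1"]) auto
    next
      fix x assume "x \<in> (\<lambda>b::nat. exp (L * real b)) ` {0..<k}"
      then obtain b where "b < k" "x = exp (L * real b)" by auto
      then show "x \<in> (\<lambda>\<kappa>. exp (L * real (\<kappa> - 1))) ` {1..k}" by (intro image_eqI[of _ _ "b + 1"]) auto
    qed
    finally show ?thesis .
  qed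
  have Spos: "n > 0" if "n \<in> Sset m k" for n using that Ss by auto
  have Sfin: "finite (Sset m k)" using Ss by simp
  have U: "(\<Union>g\<in>{g \<in> grid m k \<theta> \<tau>. g0 \<le> g}. mults g \<Delta>) = (\<Union>n\<in>Sset m k. mults (g0 * n) \<Delta>)"
    if D: "\<Delta> \<ge> 0" for \<Delta>
  proof (intro equalityI subsetI)
    fix x assume "x \<in> (\<Union>g\<in>{g \<in> grid m k \<theta> \<tau>. g0 \<le> g}. mults g \<Delta>)"
    then obtain j :: nat where x: "x \<in> mults (g0 * exp (L * real j)) \<Delta>" unfolding G0 by blast
    then obtain i :: int where xi: "x = of_int i * (g0 * exp (L * real j))" and x0: "0 \<le> x" "x \<le> \<Delta>"
      using mults_iff[of "g0 * exp (L * real j)" \<Delta> x] g0pos D by auto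
    define a where "a = j div k"
    define b where "b = j mod k"
    have jab: "real j = real a * real k + real b" unfolding a_def b_def
      by (metis div_mult_mod_eq of_nat_add of_nat_mult)
    have "exp (L * real j) = exp (real a * (L * real k)) * exp (L * real b)"
      unfolding jab by (simp add: algebra_simps flip: exp_add)
    also have "\<dots> = real m ^ a * exp (L * real b)" unfolding exp_of_nat_mult eLk ..
    finally have "x = of_int (i * int m ^ a) * (g0 * exp (L * real b))" unfolding xi by simp
    then have ex: "\<exists>j::int. x = of_int j * (g0 * exp (L * real b))" by blast
    have gp: "g0 * exp (L * real b) > 0" using g0pos by simp
    have "x \<in> mults (g0 * exp (L * real b)) \<Delta>"
      using mults_iff[OF gp D, of x] ex x0 by blast
    moreover have "exp (L * real b) \<in> Sset m k" unfolding Ss b_def using k1 by auto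
    ultimately show "x \<in> (\<Union>n\<in>Sset m k. mults (g0 * n) \<Delta>)" by blast
  next
    fix x assume "x \<in> (\<Union>n\<in>Sset m k. mults (g0 * n) \<Delta>)"
    then obtain b :: nat where "x \<in> mults (g0 * exp (L * real b)) \<Delta>" unfolding Ss by blast
    then show "x \<in> (\<Union>g\<in>{g \<in> grid m k \<theta> \<tau>. g0 \<le> g}. mults g \<Delta>)" unfolding G0 by blast
  qed
  define S where "S = (\<Sum>N\<in>Pow (Sset m k) - {{}}. (-1) ^ (card N + 1) * inv_LCM N)"
  have ev: "\<forall>\<^sub>F \<Delta> in at_top. (\<Sum>N\<in>Pow (Sset m k) - {{}}. (-1) ^ (card N + 1) * (real (card (\<Inter>n\<in>N. mults (g0 * n) \<Delta>)) / \<Delta>))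
      = real (card (\<Union>g\<in>{g \<in> grid m k \<theta> \<tau>. rnd m k \<theta> \<tau> \<tau> \<le> g}. mults g \<Delta>)) / \<Delta>"
    using eventually_ge_at_top[of 0]
  proof eventually_elim
    case (elim \<Delta>)
    have "real (card (\<Union>g\<in>{g \<in> grid m k \<theta> \<tau>. rnd m k \<theta> \<tau> \<tau> \<le> g}. mults g \<Delta>))
        = (\<Sum>N\<in>Pow (Sset m k) - {{}}. (-1) ^ (card N + 1) * real (card (\<Inter>n\<in>N. mults (g0 * n) \<Delta>)))"
      unfolding g0_def[symmetric] U[OF elim] by (rule IE[OF Sfin finite_mults])
    then show ?case by (simp add: sum_divide_distrib)
  qed
  have lim: "((\<lambda>\<Delta>. \<Sum>N\<in>Pow (Sset m k) - {{}}. (-1) ^ (card N + 1) * (real (card (\<Inter>n\<in>N. mults (g0 * n) \<Delta>)) / \<Delta>))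
      \<longlongrightarrow> (\<Sum>N\<in>Pow (Sset m k) - {{}}. (-1) ^ (card N + 1) * (inv_LCM N / g0))) at_top"
  proof (intro tendsto_sum tendsto_mult tendsto_const)
    fix N assume "N \<in> Pow (Sset m k) - {{}}"
    then show "((\<lambda>\<Delta>. real (card (\<Inter>n\<in>N. mults (g0 * n) \<Delta>)) / \<Delta>) \<longlongrightarrow> inv_LCM N / g0) at_top"
      using Spos g0pos by (intro lim_inter) auto
  qed
  have "(\<Sum>N\<in>Pow (Sset m k) - {{}}. (-1) ^ (card N + 1) * (inv_LCM N / g0)) = S / g0"
    unfolding S_def by (simp add: sum_divide_distrib)
  then have "((\<lambda>\<Delta>. real (card (\<Union>g\<in>{g \<in> grid m k \<theta> \<tau>. rnd m k \<theta> \<tau> \<tau> \<le> g}. mults g \<Delta>)) / \<Delta>) \<longlongrightarrow> S / g0) at_top"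
    using tendsto_cong[OF ev] lim by simp
  then have "density m k \<theta> \<tau> = S / g0"
    unfolding density_def by (rule tendsto_Lim[rotated]) simp
  then show ?thesis unfolding S_def g0_def .
qed

end

theorem claim3p1:
  fixes m k :: nat and \<tau> :: real
  assumes "m \<ge> 2" and "k \<ge> 1" and "\<tau> > 0"
  shows "(\<forall>t::real. t > 0 \<longrightarrow>
            ((\<lambda>\<theta>. rnd m k \<theta> \<tau> t) has_integral
               (real k * (real m powr (1 / real k) - 1) / ln (real m) * t)) {0..1})
       \<and> (\<forall>t::real. t > 0 \<longrightarrow>
            ((\<lambda>\<theta>. 1 / rnd m k \<theta> \<tau> t) has_integral
               (real k * (real m powr (1 / real k) - 1) / (real m powr (1 / real k) * ln (real m)) * (1 / t))) {0..1})
       \<and> ((\<lambda>\<theta>. density m k \<theta> \<tau>) has_integral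
               (real k * (real m powr (1 / real k) - 1) / (real m powr (1 / real k) * ln (real m))
                * (\<Sum>N\<in>Pow (Sset m k) - {{}}. (-1) ^ (card N + 1) * inv_LCM N) * (1 / \<tau>))) {0..1}"
proof (intro conjI allI impI)
  fix t :: real assume "t > 0"
  then show "((\<lambda>\<theta>. rnd m k \<theta> \<tau> t) has_integral
               (real k * (real m powr (1 / real k) - 1) / ln (real m) * t)) {0..1}"
    using part1[OF assms] by blast
next
  fix t :: real assume "t > 0"
  then show "((\<lambda>\<theta>. 1 / rnd m k \<theta> \<tau> t) has_integral
               (real k * (real m powr (1 / real k) - 1) / (real m powr (1 / real k) * ln (real m)) * (1 / t))) {0..1}"
    using part2[OF assms] by blast
next
  define S where "S = (\<Sum>N\<in>Pow (Sset m k) - {{}}. (-1) ^ (card N + 1) * inv_LCM N)"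
  have eqf: "(\<lambda>\<theta>. density m k \<theta> \<tau>) = (\<lambda>\<theta>. 1 / rnd m k \<theta> \<tau> \<tau> * S)"
    by (rule ext) (simp add: density_eq[OF assms] S_def)
  have "((\<lambda>\<theta>. 1 / rnd m k \<theta> \<tau> \<tau> * S) has_integral
       (real k * (real m powr (1 / real k) - 1) / (real m powr (1 / real k) * ln (real m)) * (1 / \<tau>)) * S) {0..1}"
    by (rule has_integral_mult_left[OF part2[OF assms assms(3)]])
  then show "((\<lambda>\<theta>. density m k \<theta> \<tau>) has_integral
               (real k * (real m powr (1 / real k) - 1) / (real m powr (1 / real k) * ln (real m))
                * (\<Sum>N\<in>Pow (Sset m k) - {{}}. (-1) ^ (card N + 1) * inv_LCM N) * (1 / \<tau>))) {0..1}"
    unfolding eqf S_def[symmetric] by (simp add: ac_simps)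
qed

end
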